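(* Assume the loss $f(\cdot,z)$ is convex and $\beta$-smooth for all $z\in\mathcal{Z}$. Consider full-batch GD with $T$ iterations and learning rates $\eta_t\le1/(2\beta)$ for all $t\le T+1$. Then for the outputs $W_{T+1}\equiv A(S)$, $W^{(i)}_{T+1}\equiv A(S^{(i)})$, $$\epsilon_{\mathrm{stab}(A)}\le\frac{4\,\epsilon_{\mathrm{path}}}{n^2}\sum_{t=1}^T\eta_t\le\frac{32\beta\sum_{t=1}^T\eta_t}{n^2}\left(\mathbb{E}[\|W_1-W^*_S\|_2^2]+\epsilon_{\mathbf{c}}\sum_{t=1}^T\eta_t\right).$$
   Context: Let $\mathcal{D}$ be a distribution on $\mathcal{Z}$ and $z_1,\dots,z_n,z_i'$ i.i.d. from $\mathcal{D}$; $S=(z_1,\dots,z_n)$, $S^{(i)}$ is $S$ with $z_i$ replaced by $z_i'$. The loss $f:\mathbb{R}^d\times\mathcal{Z}\to[0,\infty)$ is non-negative; $\beta$-smooth means $\|\nabla f(w,z)-\nabla f(u,z)\|_2\le\beta\|w-u\|_2$. $R_S(w)=\frac1n\sum_j f(w,z_j)$, $W^*_S$ a minimizer of $R_S$ (assumed to exist). Full-batch GD on $S$: from a fixed $W_1$, $W_{t+1}=W_t-\frac{\eta_t}{n}\sum_{j=1}^n\nabla f(W_t,z_j)$, $t=1,\dots,T$, output $A(S)=W_{T+1}$; $W^{(i)}_t$ are the GD iterates on $S^{(i)}$ from the same $W_1$ with the same step sizes. Definitions: $\epsilon_{\mathrm{stab}(A)}=\mathbb{E}[\|A(S)-A(S^{(i)})\|_2^2]$;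 $\epsilon_{\mathrm{path}}=\sum_{t=1}^T\eta_t\mathbb{E}[\|\nabla f(W_t,z_i)\|_2^2]$; $\epsilon_{\mathbf{c}}=\mathbb{E}[R_S(W^*_S)]$. *)

theory Defs
  imports "HOL-Probability.Probability"
begin

text \<open>The sample S is a function on indices 0..n-1
  (index j corresponds to z_{j+1} in the paper). gd_iter grad eta n W1 S k is the
  paper's iterate W_{k+1}: gd_iter ... 0 = W_1 and
  W_{t+1} = W_t - (eta t / n) * sum_j grad W_t z_j.\<close>

primrec gd_iter :: "('a::real_normed_vector \<Rightarrow> 'z \<Rightarrow> 'a) \<Rightarrow> (nat \<Rightarrow> real) \<Rightarrow> nat \<Rightarrow> 'a
    \<Rightarrow> (nat \<Rightarrow> 'z) \<Rightarrow> nat \<Rightarrow> 'a" where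
  "gd_iter grad eta n W1 S 0 = W1"
| "gd_iter grad eta n W1 S (Suc k) =
     gd_iter grad eta n W1 S k
       - (eta (Suc k) / real n) *\<^sub>R (\<Sum>j<n. grad (gd_iter grad eta n W1 S k) (S j))"

definition emp_risk :: "('a \<Rightarrow> 'z \<Rightarrow> real) \<Rightarrow> nat \<Rightarrow> (nat \<Rightarrow> 'z) \<Rightarrow> 'a \<Rightarrow> real" where
  "emp_risk f n S w = (\<Sum>j<n. f w (S j)) / real n"

end

theory Submission
  imports Defs
begin


lemma line_deriv:
  fixes g :: "'a::real_inner \<Rightarrow> real"
  assumes gd: "\<And>w. GDERIV g w :> G w"
  shows "((\<lambda>t. g (x + t *\<^sub>R d)) has_real_derivative (G (x + t *\<^sub>R d) \<bullet> d)) (at t)"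
proof -
  have l: "((\<lambda>t. x + t *\<^sub>R d) has_derivative (\<lambda>s. s *\<^sub>R d)) (at t)"
    by (auto intro!: derivative_eq_intros)
  have "(g has_derivative (\<lambda>h. h \<bullet> G (x + t *\<^sub>R d))) (at (x + t *\<^sub>R d))"
    using gd[of "x + t *\<^sub>R d"] by (simp add: gderiv_def)
  from has_derivative_compose[OF l this]
  have "((\<lambda>t. g (x + t *\<^sub>R d)) has_derivative (\<lambda>s. (s *\<^sub>R d) \<bullet> G (x + t *\<^sub>R d))) (at t)" .
  moreover have "(\<lambda>s. (s *\<^sub>R d) \<bullet> G (x + t *\<^sub>R d)) = (*) (G (x + t *\<^sub>R d) \<bullet> d)"
    by (auto simp: fun_eq_iff inner_commute)
  ultimately show ?thesis by (simp add: has_field_derivative_def)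
qed

lemma descent:
  fixes g :: "'a::real_inner \<Rightarrow> real"
  assumes gd: "\<And>w. GDERIV g w :> G w"
    and sm: "\<And>w u. norm (G w - G u) \<le> b * norm (w - u)"
  shows "g y \<le> g x + G x \<bullet> (y - x) + b / 2 * (norm (y - x))\<^sup>2"
proof -
  define d where "d = y - x"
  define k where "k t = g (x + t *\<^sub>R d) - t * (G x \<bullet> d) - b / 2 * t\<^sup>2 * (norm d)\<^sup>2" for t
  have "k 1 \<le> k 0"
  proof (rule DERIV_nonpos_imp_nonincreasing[of 0 1 k])
    fix t :: real assume t: "0 \<le> t" "t \<le> 1"
    have D: "(k has_real_derivative (G (x + t *\<^sub>R d) \<bullet> d - G x \<bullet> d - b * t * (norm d)\<^sup>2)) (at t)"
      unfolding k_def
      using line_deriv[OF gd, of x d t] by (auto intro!: derivative_eq_intros DERIV_diff simp: power2_eq_square)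
    have "G (x + t *\<^sub>R d) \<bullet> d - G x \<bullet> d = (G (x + t *\<^sub>R d) - G x) \<bullet> d"
      by (simp add: inner_diff_left)
    also have "\<dots> \<le> norm (G (x + t *\<^sub>R d) - G x) * norm d"
      by (rule norm_cauchy_schwarz)
    also have "\<dots> \<le> b * norm (t *\<^sub>R d) * norm d"
      using sm[of "x + t *\<^sub>R d" x] by (intro mult_right_mono) auto
    also have "\<dots> = b * t * (norm d)\<^sup>2" using t by (simp add: power2_eq_square)
    finally show "\<exists>y. (k has_real_derivative y) (at t) \<and> y \<le> 0"
      using D by (intro exI[of _ "G (x + t *\<^sub>R d) \<bullet> d - G x \<bullet> d - b * t * (norm d)\<^sup>2"]) auto
  qed simp
  then show ?thesis by (simp add: k_def d_def)
qed

lemma grad_ineq: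
  fixes g :: "'a::real_inner \<Rightarrow> real"
  assumes gd: "\<And>w. GDERIV g w :> G w"
    and cv: "convex_on UNIV g"
  shows "g x + G x \<bullet> (y - x) \<le> g y"
proof -
  define d where "d = y - x"
  define \<phi> where "\<phi> t = g (x + t *\<^sub>R d)" for t
  have cphi: "convex_on UNIV \<phi>"
  proof (rule convex_onI)
    fix t a b :: real assume t: "0 < t" "t < 1"
    have "x + ((1 - t) *\<^sub>R a + t *\<^sub>R b) *\<^sub>R d = (1 - t) *\<^sub>R (x + a *\<^sub>R d) + t *\<^sub>R (x + b *\<^sub>R d)"
      by (simp add: algebra_simps)
    then show "\<phi> ((1 - t) *\<^sub>R a + t *\<^sub>R b) \<le> (1 - t) * \<phi> a + t * \<phi> b"
      unfolding \<phi>_def using convex_onD[OF cv, of t "x + a *\<^sub>R d" "x + b *\<^sub>R d"] t by simp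
  qed simp
  have D: "(\<phi> has_real_derivative (G x \<bullet> d)) (at 0 within UNIV)"
    unfolding \<phi>_def using line_deriv[OF gd, of x d 0] by simp
  have "\<phi> 1 - \<phi> 0 \<ge> (G x \<bullet> d) * (1 - 0)"
    by (rule convex_on_imp_above_tangent[OF cphi _ _ _ D]) auto
  then show ?thesis by (simp add: \<phi>_def d_def)
qed

lemma self_bound:
  fixes g :: "'a::real_inner \<Rightarrow> real"
  assumes gd: "\<And>w. GDERIV g w :> G w"
    and sm: "\<And>w u. norm (G w - G u) \<le> b * norm (w - u)"
    and b: "b > 0" and nn: "\<And>w. g w \<ge> 0"
  shows "(norm (G x))\<^sup>2 \<le> 2 * b * g x"
proof -
  have "0 \<le> g (x - (1/b) *\<^sub>R G x)" by (rule nn)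
  also have "\<dots> \<le> g x + G x \<bullet> ((x - (1/b) *\<^sub>R G x) - x) + b / 2 * (norm ((x - (1/b) *\<^sub>R G x) - x))\<^sup>2"
    by (rule descent[OF gd sm])
  also have "\<dots> = g x - (norm (G x))\<^sup>2 / (2 * b)"
    using b by (simp add: power2_eq_square power_mult_distrib inner_commute field_simps flip: power2_norm_eq_inner)
  finally show ?thesis using b by (simp add: field_simps)
qed

lemma coco_aux:
  fixes g :: "'a::real_inner \<Rightarrow> real"
  assumes gd: "\<And>w. GDERIV g w :> G w"
    and cv: "convex_on UNIV g"
    and sm: "\<And>w u. norm (G w - G u) \<le> b * norm (w - u)"
    and b: "b > 0"
  shows "g x + G x \<bullet> (y - x) + (norm (G y - G x))\<^sup>2 / (2 * b) \<le> g y"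
proof -
  define z where "z = y - (1/b) *\<^sub>R (G y - G x)"
  have 1: "g x + G x \<bullet> (z - x) \<le> g z" by (rule grad_ineq[OF gd cv])
  have 2: "g z \<le> g y + G y \<bullet> (z - y) + b / 2 * (norm (z - y))\<^sup>2" by (rule descent[OF gd sm])
  define u where "u = G y - G x"
  have zy: "z - y = - ((1/b) *\<^sub>R u)" by (simp add: z_def u_def)
  have zx: "z - x = (y - x) - (1/b) *\<^sub>R u" by (simp add: z_def u_def algebra_simps)
  have a: "G y \<bullet> (z - y) - G x \<bullet> (z - x) = - (1/b) * (u \<bullet> u) + G x \<bullet> (x - y)"
    unfolding zy zx by (simp add: u_def inner_diff_left inner_diff_right algebra_simps)
  have c: "b / 2 * (norm (z - y))\<^sup>2 = (u \<bullet> u) / (2 * b)"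
    unfolding zy using b by (simp add: power2_norm_eq_inner power2_eq_square field_simps flip: norm_eq_sqrt_inner) (simp add: power2_norm_eq_inner flip: power2_eq_square)
  have "G y \<bullet> (z - y) - G x \<bullet> (z - x) + b / 2 * (norm (z - y))\<^sup>2
      = G x \<bullet> (x - y) - (norm (G y - G x))\<^sup>2 / (2 * b)"
    unfolding a c using b by (simp add: power2_norm_eq_inner u_def[symmetric] field_simps)
  with 1 2 have "g x \<le> g y + G x \<bullet> (x - y) - (norm (G y - G x))\<^sup>2 / (2 * b)" by linarith
  moreover have "G x \<bullet> (x - y) = - (G x \<bullet> (y - x))" by (simp add: inner_diff_right)
  ultimately show ?thesis by linarith
qed

lemma coco:
  fixes g :: "'a::real_inner \<Rightarrow> real"
  assumes gd: "\<And>w. GDERIV g w :> G w"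
    and cv: "convex_on UNIV g"
    and sm: "\<And>w u. norm (G w - G u) \<le> b * norm (w - u)"
    and b: "b > 0"
  shows "(norm (G x - G y))\<^sup>2 \<le> b * ((G x - G y) \<bullet> (x - y))"
proof -
  have 1: "g x + G x \<bullet> (y - x) + (norm (G y - G x))\<^sup>2 / (2 * b) \<le> g y" by (rule coco_aux[OF assms])
  have 2: "g y + G y \<bullet> (x - y) + (norm (G x - G y))\<^sup>2 / (2 * b) \<le> g x" by (rule coco_aux[OF assms])
  have n: "norm (G y - G x) = norm (G x - G y)" by (rule norm_minus_commute)
  have "G x \<bullet> (y - x) + G y \<bullet> (x - y) = - ((G x - G y) \<bullet> (x - y))"
    by (simp add: inner_diff_left inner_diff_right)
  with 1 2 n have "(norm (G x - G y))\<^sup>2 / b \<le> (G x - G y) \<bullet> (x - y)" by (simp add: field_simps)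
  then show ?thesis using b by (simp add: field_simps)
qed

lemma nonexp:
  fixes u :: "'b \<Rightarrow> 'a::real_inner" and b c :: real
  assumes J: "finite J" and cc: "\<And>j. j \<in> J \<Longrightarrow> (norm (u j))\<^sup>2 \<le> b * (u j \<bullet> d)"
    and b: "b > 0" and c: "c \<ge> 0" and cJ: "c * card J * b \<le> 2"
  shows "norm (d - c *\<^sub>R (\<Sum>j\<in>J. u j)) \<le> norm d"
proof -
  define U where "U = (\<Sum>j\<in>J. u j)"
  define s where "s = (\<Sum>j\<in>J. (norm (u j))\<^sup>2)"
  have s0: "s \<ge> 0" unfolding s_def by (simp add: sum_nonneg)
  have "s \<le> (\<Sum>j\<in>J. b * (u j \<bullet> d))" unfolding s_def by (rule sum_mono) (rule cc)
  also have "\<dots> = b * (d \<bullet> U)" by (simp add: U_def sum_distrib_left inner_sum_right inner_commute)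
  finally have dU: "s / b \<le> d \<bullet> U" using b by (simp add: field_simps)
  have "norm U \<le> (\<Sum>j\<in>J. norm (u j))" unfolding U_def by (rule norm_sum)
  hence "(norm U)\<^sup>2 \<le> (\<Sum>j\<in>J. norm (u j))\<^sup>2" by (simp add: power_mono)
  also have "\<dots> \<le> s * card J" unfolding s_def by (rule sum_squared_le_sum_of_squares)
  finally have U2: "(norm U)\<^sup>2 \<le> s * card J" .
  have "(norm (d - c *\<^sub>R U))\<^sup>2 = (norm d)\<^sup>2 - 2 * c * (d \<bullet> U) + c\<^sup>2 * (norm U)\<^sup>2"
    unfolding power2_norm_eq_inner by (simp add: inner_diff_left inner_diff_right inner_commute power2_eq_square algebra_simps)
  also have "\<dots> \<le> (norm d)\<^sup>2 - 2 * c * (s / b) + c\<^sup>2 * (s * card J)"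
    using dU U2 c by (intro add_mono diff_mono mult_left_mono) auto
  also have "\<dots> = (norm d)\<^sup>2 - c * s * (2 - c * card J * b) / b"
    using b by (simp add: field_simps power2_eq_square)
  also have "\<dots> \<le> (norm d)\<^sup>2"
    using b c s0 cJ by (simp add: divide_nonneg_pos)
  finally show ?thesis by (simp add: power_mono_iff[symmetric] abs_le_square_iff U_def)
qed

locale gdsetup =
  fixes f :: "'a::euclidean_space \<Rightarrow> 'z \<Rightarrow> real" and grad :: "'a \<Rightarrow> 'z \<Rightarrow> 'a"
    and \<beta> :: real and eta :: "nat \<Rightarrow> real" and n :: nat and W1 :: 'a
  assumes gradient: "\<And>w z. GDERIV (\<lambda>u. f u z) w :> grad w z"
    and convex: "\<And>z. convex_on UNIV (\<lambda>w. f w z)"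
    and beta_pos: "\<beta> > 0"
    and smooth: "\<And>w u z. norm (grad w z - grad u z) \<le> \<beta> * norm (w - u)"
    and f_nonneg: "\<And>w z. f w z \<ge> 0"
begin

abbreviation W where "W S k \<equiv> gd_iter grad eta n W1 S k"

lemma coco': "(norm (grad x z - grad y z))\<^sup>2 \<le> \<beta> * ((grad x z - grad y z) \<bullet> (x - y))"
  by (rule coco[OF gradient convex smooth beta_pos])

lemma stab_bound:
  assumes i: "i < n" and eta: "\<And>t. t \<in> {1..k} \<Longrightarrow> 0 < eta t \<and> eta t \<le> 1 / (2 * \<beta>)"
  shows "norm (W S k - W (S(i:=z)) k) \<le> (\<Sum>t\<in>{1..k}. eta t / n *
           (norm (grad (W S (t-1)) (S i)) + norm (grad (W (S(i:=z)) (t-1)) z)))"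
  using eta
proof (induction k)
  case 0
  then show ?case by simp
next
  case (Suc k)
  define S' where "S' = S(i:=z)"
  define x where "x = W S k"
  define y where "y = W S' k"
  define c where "c = eta (Suc k) / n"
  define J where "J = {..<n} - {i}"
  have etak: "0 < eta (Suc k)" "eta (Suc k) \<le> 1 / (2 * \<beta>)" using Suc.prems[of "Suc k"] by auto
  have IH: "norm (x - y) \<le> (\<Sum>t\<in>{1..k}. eta t / n *
           (norm (grad (W S (t-1)) (S i)) + norm (grad (W S' (t-1)) z)))"
  proof -
    have "\<And>t. t \<in> {1..k} \<Longrightarrow> 0 < eta t \<and> eta t \<le> 1 / (2 * \<beta>)" using Suc.prems by auto
    from Suc.IH[OF this] show ?thesis unfolding x_def y_def S'_def .
  qed
  have c0: "c \<ge> 0" using etak by (simp add: c_def)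
  have fin: "finite J" by (simp add: J_def)
  have cardJ: "card J = n - 1" using i by (simp add: J_def)
  have cJ: "c * card J * \<beta> \<le> 2"
  proof -
    have "c * card J * \<beta> \<le> eta (Suc k) * \<beta>"
      using i etak beta_pos unfolding c_def cardJ
      by (intro mult_right_mono) (auto simp: field_simps of_nat_diff)
    also have "\<dots> \<le> 1/2" using etak beta_pos by (simp add: field_simps)
    finally show ?thesis by simp
  qed
  have split: "(\<Sum>j<n. h j) = h i + (\<Sum>j\<in>J. h j)" for h :: "nat \<Rightarrow> 'a"
    unfolding J_def using i by (simp add: sum.remove)
  have "W S (Suc k) - W S' (Suc k) = (x - y) - c *\<^sub>R ((\<Sum>j<n. grad x (S j)) - (\<Sum>j<n. grad y (S' j)))"
    by (simp add: x_def y_def c_def algebra_simps)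
  also have "(\<Sum>j<n. grad x (S j)) - (\<Sum>j<n. grad y (S' j))
      = (grad x (S i) - grad y z) + (\<Sum>j\<in>J. grad x (S j) - grad y (S j))"
    unfolding split by (simp add: S'_def J_def sum_subtractf algebra_simps)
  finally have eq: "W S (Suc k) - W S' (Suc k) =
      ((x - y) - c *\<^sub>R (\<Sum>j\<in>J. grad x (S j) - grad y (S j))) - c *\<^sub>R (grad x (S i) - grad y z)"
    by (simp add: algebra_simps)
  have ne: "norm ((x - y) - c *\<^sub>R (\<Sum>j\<in>J. grad x (S j) - grad y (S j))) \<le> norm (x - y)"
    by (rule nonexp[OF fin coco' beta_pos c0 cJ])
  have "norm (W S (Suc k) - W S' (Suc k)) \<le> norm (x - y) + c * (norm (grad x (S i)) + norm (grad y z))"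
  proof -
    have "norm (W S (Suc k) - W S' (Suc k)) \<le> norm ((x - y) - c *\<^sub>R (\<Sum>j\<in>J. grad x (S j) - grad y (S j)))
        + norm (c *\<^sub>R (grad x (S i) - grad y z))"
      unfolding eq by (rule norm_triangle_ineq4)
    also have "norm (c *\<^sub>R (grad x (S i) - grad y z)) \<le> c * (norm (grad x (S i)) + norm (grad y z))"
      using c0 norm_triangle_ineq4[of "grad x (S i)" "grad y z"] by (simp add: mult_left_mono)
    finally show ?thesis using ne by linarith
  qed
  also have "\<dots> \<le> (\<Sum>t\<in>{1..Suc k}. eta t / n *
           (norm (grad (W S (t-1)) (S i)) + norm (grad (W S' (t-1)) z)))"
    using IH by (simp add: x_def y_def c_def)
  finally show ?case by (simp only: S'_def)
qed

lemma weighted_cs: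
  fixes w x :: "'b \<Rightarrow> real"
  assumes "\<And>t. t \<in> I \<Longrightarrow> w t \<ge> 0"
  shows "(\<Sum>t\<in>I. w t * x t)\<^sup>2 \<le> (\<Sum>t\<in>I. w t) * (\<Sum>t\<in>I. w t * (x t)\<^sup>2)"
proof -
  have "(\<Sum>t\<in>I. w t * x t) = (\<Sum>t\<in>I. sqrt (w t) * (sqrt (w t) * x t))"
    using assms by (intro sum.cong) (auto simp: mult.assoc[symmetric])
  also have "(\<dots>)\<^sup>2 \<le> (\<Sum>t\<in>I. (sqrt (w t))\<^sup>2) * (\<Sum>t\<in>I. (sqrt (w t) * x t)\<^sup>2)"
    by (rule Cauchy_Schwarz_ineq_sum)
  also have "\<dots> = (\<Sum>t\<in>I. w t) * (\<Sum>t\<in>I. w t * (x t)\<^sup>2)"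
    using assms by (intro arg_cong2[where f="(*)"] sum.cong) (auto simp: power_mult_distrib)
  finally show ?thesis .
qed

lemma stab_sq:
  assumes i: "i < n" and eta: "\<And>t. t \<in> {1..k} \<Longrightarrow> 0 < eta t \<and> eta t \<le> 1 / (2 * \<beta>)"
  shows "(norm (W S k - W (S(i:=z)) k))\<^sup>2 \<le> 2 * (\<Sum>t\<in>{1..k}. eta t) / (real n)\<^sup>2 * (\<Sum>t\<in>{1..k}. eta t *
           ((norm (grad (W S (t-1)) (S i)))\<^sup>2 + (norm (grad (W (S(i:=z)) (t-1)) z))\<^sup>2))"
proof -
  define a where "a t = norm (grad (W S (t-1)) (S i))" for t
  define b where "b t = norm (grad (W (S(i:=z)) (t-1)) z)" for t
  have n: "real n > 0" using i by simp
  have "norm (W S k - W (S(i:=z)) k) \<le> (\<Sum>t\<in>{1..k}. eta t / n * (a t + b t))"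
    unfolding a_def b_def by (rule stab_bound[OF i eta])
  also have "\<dots> = (\<Sum>t\<in>{1..k}. eta t * (a t + b t)) / n"
    by (simp add: sum_divide_distrib)
  finally have 1: "norm (W S k - W (S(i:=z)) k) \<le> (\<Sum>t\<in>{1..k}. eta t * (a t + b t)) / n" .
  have "(norm (W S k - W (S(i:=z)) k))\<^sup>2 \<le> ((\<Sum>t\<in>{1..k}. eta t * (a t + b t)) / n)\<^sup>2"
    using 1 by (intro power_mono) auto
  also have "\<dots> = (\<Sum>t\<in>{1..k}. eta t * (a t + b t))\<^sup>2 / (real n)\<^sup>2"
    by (simp add: power_divide)
  also have "(\<Sum>t\<in>{1..k}. eta t * (a t + b t))\<^sup>2 \<le> (\<Sum>t\<in>{1..k}. eta t) * (\<Sum>t\<in>{1..k}. eta t * (a t + b t)\<^sup>2)"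
    using eta by (intro weighted_cs) (auto intro: less_imp_le)
  also have "\<dots> \<le> (\<Sum>t\<in>{1..k}. eta t) * (\<Sum>t\<in>{1..k}. eta t * (2 * ((a t)\<^sup>2 + (b t)\<^sup>2)))"
  proof -
    have "(\<Sum>t\<in>{1..k}. eta t * (a t + b t)\<^sup>2) \<le> (\<Sum>t\<in>{1..k}. eta t * (2 * ((a t)\<^sup>2 + (b t)\<^sup>2)))"
    proof (rule sum_mono)
      fix t assume t: "t \<in> {1..k}"
      have "0 \<le> (a t - b t)\<^sup>2" by simp
      then have "(a t + b t)\<^sup>2 \<le> 2 * ((a t)\<^sup>2 + (b t)\<^sup>2)"
        unfolding power2_diff power2_sum by (simp add: algebra_simps)
      then show "eta t * (a t + b t)\<^sup>2 \<le> eta t * (2 * ((a t)\<^sup>2 + (b t)\<^sup>2))"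
        using eta[OF t] by (intro mult_left_mono) auto
    qed
    moreover have "0 \<le> (\<Sum>t\<in>{1..k}. eta t)" using eta by (intro sum_nonneg) (auto intro: less_imp_le)
    ultimately show ?thesis by (rule mult_left_mono)
  qed
  finally have "(norm (W S k - W (S(i:=z)) k))\<^sup>2 \<le> (\<Sum>t\<in>{1..k}. eta t) * (\<Sum>t\<in>{1..k}. eta t * (2 * ((a t)\<^sup>2 + (b t)\<^sup>2))) / (real n)\<^sup>2"
    using n by (simp add: divide_right_mono)
  also have "\<dots> = 2 * (\<Sum>t\<in>{1..k}. eta t) / (real n)\<^sup>2 * (\<Sum>t\<in>{1..k}. eta t * ((a t)\<^sup>2 + (b t)\<^sup>2))"
  proof -
    have "(\<Sum>t\<in>{1..k}. eta t * (2 * ((a t)\<^sup>2 + (b t)\<^sup>2))) = (\<Sum>t\<in>{1..k}. 2 * (eta t * ((a t)\<^sup>2 + (b t)\<^sup>2)))"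
      by (rule sum.cong) auto
    also have "\<dots> = 2 * (\<Sum>t\<in>{1..k}. eta t * ((a t)\<^sup>2 + (b t)\<^sup>2))"
      by (rule sum_distrib_left[symmetric])
    finally show ?thesis by simp
  qed
  finally show ?thesis unfolding a_def b_def .
qed


lemma grad_ineq': "f x z + grad x z \<bullet> (y - x) \<le> f y z"
  by (rule grad_ineq[OF gradient convex])

lemma self_bound': "(norm (grad x z))\<^sup>2 \<le> 2 * \<beta> * f x z"
  by (rule self_bound[OF gradient smooth beta_pos f_nonneg])

lemma gd_conv:
  assumes n: "n > 0" and eta: "\<And>t. t \<in> {1..k} \<Longrightarrow> 0 < eta t \<and> eta t \<le> 1 / (2 * \<beta>)"
  shows "(norm (W S k - v))\<^sup>2 + (\<Sum>t\<in>{1..k}. eta t * emp_risk f n S (W S (t-1)))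
     \<le> (norm (W1 - v))\<^sup>2 + 2 * emp_risk f n S v * (\<Sum>t\<in>{1..k}. eta t)"
  using eta
proof (induction k)
  case 0
  then show ?case by simp
next
  case (Suc k)
  define R where "R = emp_risk f n S"
  define x where "x = W S k"
  define G where "G = (1 / real n) *\<^sub>R (\<Sum>j<n. grad x (S j))"
  define e where "e = eta (Suc k)"
  have etak: "0 < e" "e \<le> 1 / (2 * \<beta>)" using Suc.prems[of "Suc k"] by (auto simp: e_def)
  have IH: "(norm (x - v))\<^sup>2 + (\<Sum>t\<in>{1..k}. eta t * R (W S (t-1)))
     \<le> (norm (W1 - v))\<^sup>2 + 2 * R v * (\<Sum>t\<in>{1..k}. eta t)"
  proof -
    have "\<And>t. t \<in> {1..k} \<Longrightarrow> 0 < eta t \<and> eta t \<le> 1 / (2 * \<beta>)" using Suc.prems by auto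
    from Suc.IH[OF this] show ?thesis unfolding x_def R_def .
  qed
  have Wsuc: "W S (Suc k) = x - e *\<^sub>R G" by (simp add: x_def G_def e_def)
  have a: "(norm (x - e *\<^sub>R G - v))\<^sup>2 = (norm (x - v))\<^sup>2 - 2 * e * (G \<bullet> (x - v)) + e\<^sup>2 * (norm G)\<^sup>2"
  proof -
    have "x - e *\<^sub>R G - v = (x - v) - e *\<^sub>R G" by simp
    then show ?thesis unfolding power2_norm_eq_inner
      by (simp add: inner_diff_left inner_diff_right inner_commute power2_eq_square algebra_simps)
  qed
  have b: "R x - R v \<le> G \<bullet> (x - v)"
  proof -
    have "(\<Sum>j<n. f x (S j) - f v (S j)) \<le> (\<Sum>j<n. grad x (S j) \<bullet> (x - v))"
    proof (rule sum_mono)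
      fix j
      have "f x (S j) + grad x (S j) \<bullet> (v - x) \<le> f v (S j)" by (rule grad_ineq')
      moreover have "grad x (S j) \<bullet> (v - x) = - (grad x (S j) \<bullet> (x - v))" by (simp add: inner_diff_right)
      ultimately show "f x (S j) - f v (S j) \<le> grad x (S j) \<bullet> (x - v)" by linarith
    qed
    then have "(\<Sum>j<n. f x (S j) - f v (S j)) / n \<le> (\<Sum>j<n. grad x (S j) \<bullet> (x - v)) / n"
      using n by (simp add: divide_right_mono)
    then show ?thesis
      by (simp add: R_def emp_risk_def G_def sum_subtractf diff_divide_distrib inner_sum_left)
  qed
  have c: "(norm G)\<^sup>2 \<le> 2 * \<beta> * R x"
  proof -
    have "norm (\<Sum>j<n. grad x (S j)) \<le> (\<Sum>j<n. norm (grad x (S j)))" by (rule norm_sum)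
    hence "(norm (\<Sum>j<n. grad x (S j)))\<^sup>2 \<le> (\<Sum>j<n. norm (grad x (S j)))\<^sup>2" by (simp add: power_mono)
    also have "\<dots> \<le> (\<Sum>j<n. (norm (grad x (S j)))\<^sup>2) * card {..<n}" by (rule sum_squared_le_sum_of_squares)
    also have "\<dots> \<le> (\<Sum>j<n. 2 * \<beta> * f x (S j)) * n"
      by (simp, intro mult_right_mono sum_mono self_bound') auto
    finally have "(norm (\<Sum>j<n. grad x (S j)))\<^sup>2 \<le> (\<Sum>j<n. 2 * \<beta> * f x (S j)) * n" .
    then have "(norm (\<Sum>j<n. grad x (S j)))\<^sup>2 / (real n)\<^sup>2 \<le> (\<Sum>j<n. 2 * \<beta> * f x (S j)) * n / (real n)\<^sup>2"
      using n by (simp add: divide_right_mono)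
    also have "\<dots> = 2 * \<beta> * R x"
      using n by (simp add: R_def emp_risk_def sum_distrib_left[symmetric] power2_eq_square)
    finally show ?thesis by (simp add: G_def power_divide)
  qed
  have Rx0: "R x \<ge> 0" by (simp add: R_def emp_risk_def f_nonneg sum_nonneg)
  have d: "e\<^sup>2 * (norm G)\<^sup>2 \<le> e * R x"
  proof -
    have "e\<^sup>2 * (norm G)\<^sup>2 \<le> e\<^sup>2 * (2 * \<beta> * R x)" using c by (intro mult_left_mono) auto
    also have "\<dots> = e * (2 * \<beta> * e) * R x" by (simp add: power2_eq_square)
    also have "\<dots> \<le> e * 1 * R x"
      using etak beta_pos Rx0 by (intro mult_right_mono mult_left_mono) (auto simp: field_simps)
    finally show ?thesis by simp
  qed
  have step: "(norm (W S (Suc k) - v))\<^sup>2 \<le> (norm (x - v))\<^sup>2 - e * R x + 2 * e * R v"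
  proof -
    have "2 * e * (R x - R v) \<le> 2 * e * (G \<bullet> (x - v))" using b etak by (intro mult_left_mono) auto
    then show ?thesis unfolding Wsuc a using d by (simp add: algebra_simps)
  qed
  have sumsplit: "(\<Sum>t\<in>{1..Suc k}. h t) = (\<Sum>t\<in>{1..k}. h t) + h (Suc k)" for h :: "nat \<Rightarrow> real"
    by simp
  show ?case
    unfolding sumsplit using IH step by (simp add: x_def R_def e_def algebra_simps)
qed

end



lemma distr_upd_PiM:
  assumes M: "\<And>i. i \<in> I \<Longrightarrow> prob_space (M i)" and i: "i \<in> I"
  shows "distr (PiM I M \<Otimes>\<^sub>M M i) (PiM I M) (\<lambda>(X, x). X(i := x)) = PiM I M"
proof (rule measure_eqI_PiM_infinite[symmetric, OF refl])
  interpret M': prob_space "M i" using M i by auto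
  interpret I: prob_space "PiM I M" using M by (intro prob_space_PiM) auto
  have meas: "(\<lambda>(X, x). X(i := x)) \<in> measurable (PiM I M \<Otimes>\<^sub>M M i) (PiM I M)"
    using measurable_add_dim[of i I M] insert_absorb[OF i] by simp
  show "finite_measure (PiM I M)" by unfold_locales
  fix J A assume J: "finite J" "J \<subseteq> I" and A: "\<And>i. i \<in> J \<Longrightarrow> A i \<in> sets (M i)"
  let ?X = "prod_emb I M J (Pi\<^sub>E J A)"
  let ?B = "if i \<in> J then A i else space (M i)"
  have B: "?B \<in> sets (M i)" using A by auto
  have "PiM I M ?X = (\<Prod>j\<in>J. M j (A j))" using M J A by (intro emeasure_PiM_emb) auto
  also have "\<dots> = M i ?B * (\<Prod>j\<in>J-{i}. M j (A j))"
    using prod.insert_remove[of J "\<lambda>j. M j (A j)" i] J M'.emeasure_space_1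
    by (cases "i \<in> J") (auto simp: insert_absorb)
  also have "(\<Prod>j\<in>J-{i}. M j (A j)) = PiM I M (prod_emb I M (J-{i}) (Pi\<^sub>E (J-{i}) A))"
    using M J A by (intro emeasure_PiM_emb[symmetric]) auto
  also have "M i ?B * PiM I M (prod_emb I M (J-{i}) (Pi\<^sub>E (J-{i}) A)) =
      (PiM I M \<Otimes>\<^sub>M M i) (prod_emb I M (J-{i}) (Pi\<^sub>E (J-{i}) A) \<times> ?B)"
    using J A B by (subst M'.emeasure_pair_measure_Times) (auto intro!: sets_PiM_I simp: mult.commute)
  also have "prod_emb I M (J-{i}) (Pi\<^sub>E (J-{i}) A) \<times> ?B =
      (\<lambda>(X, x). X(i := x)) -` ?X \<inter> space (PiM I M \<Otimes>\<^sub>M M i)"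
    using A[of i, THEN sets.sets_into_space] i J unfolding set_eq_iff
    by (auto simp add: prod_emb_def space_pair_measure space_PiM PiE_iff extensional_def split: if_split_asm)
  also have "(PiM I M \<Otimes>\<^sub>M M i) \<dots> = distr (PiM I M \<Otimes>\<^sub>M M i) (PiM I M) (\<lambda>(X, x). X(i := x)) ?X"
    using J A meas by (subst emeasure_distr) (auto intro!: sets_PiM_I)
  finally show "PiM I M ?X = distr (PiM I M \<Otimes>\<^sub>M M i) (PiM I M) (\<lambda>(X, x). X(i := x)) ?X" .
qed simp

definition sw :: "nat \<Rightarrow> nat \<Rightarrow> nat \<Rightarrow> nat" where
  "sw i j m = (if m = i then j else if m = j then i else m)"

lemma sw_inj: "inj (sw i j)"
  by (auto simp: inj_def sw_def split: if_splits)

lemma sw_sw: "sw i j (sw i j m) = m"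
  by (auto simp: sw_def)

lemma sw_lt: "i < n \<Longrightarrow> j < n \<Longrightarrow> m < n \<Longrightarrow> sw i j m < n"
  by (auto simp: sw_def)

lemma sw_bij: "i < n \<Longrightarrow> j < n \<Longrightarrow> bij_betw (sw i j) {..<n} {..<n}"
proof (rule bij_betw_imageI)
  show "inj_on (sw i j) {..<n}" by (rule inj_on_subset[OF sw_inj subset_UNIV])
  assume ij: "i < n" "j < n"
  show "sw i j ` {..<n} = {..<n}"
  proof
    show "sw i j ` {..<n} \<subseteq> {..<n}" using sw_lt[OF ij] by auto
    show "{..<n} \<subseteq> sw i j ` {..<n}"
    proof
      fix m assume "m \<in> {..<n}"
      then show "m \<in> sw i j ` {..<n}"
        by (intro image_eqI[of _ _ "sw i j m"]) (auto simp: sw_sw sw_lt[OF ij])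
    qed
  qed
qed

lemma gd_cong: "(\<And>j. j < n \<Longrightarrow> S j = S' j) \<Longrightarrow> gd_iter grad eta n W1 S k = gd_iter grad eta n W1 S' k"
  by (induction k) auto

lemma gd_perm:
  assumes "bij_betw p {..<n} {..<n}"
  shows "gd_iter grad eta n W1 (\<lambda>m. S (p m)) k = gd_iter grad eta n W1 S k"
proof (induction k)
  case (Suc k)
  have "(\<Sum>j<n. grad w (S (p j))) = (\<Sum>j<n. grad w (S j))" for w
    using sum.reindex_bij_betw[OF assms, of "\<lambda>j. grad w (S j)"] by simp
  then show ?case using Suc by simp
qed simp

lemma distr_sw:
  assumes D: "prob_space D" and i: "i < n" and j: "j < n"
  shows "distr (PiM {..<n} (\<lambda>_. D)) (PiM {..<n} (\<lambda>_. D)) (\<lambda>\<omega>. \<lambda>m\<in>{..<n}. \<omega> (sw i j m)) = PiM {..<n} (\<lambda>_. D)"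
  using distr_PiM_reindex[of "{..<n}" "\<lambda>_. D" "sw i j" "{..<n}"] D sw_bij[OF i j] sw_inj[of i j]
  by (auto simp: bij_betw_def inj_on_subset)



lemma comp_meas:
  assumes "(\<lambda>(w, z). g w z) \<in> borel_measurable (borel \<Otimes>\<^sub>M D)" "F \<in> borel_measurable (PiM I (\<lambda>_. D))" "j \<in> I"
  shows "(\<lambda>S. g (F S) (S j)) \<in> borel_measurable (PiM I (\<lambda>_. D))"
proof -
  have "(\<lambda>S. (F S, S j)) \<in> measurable (PiM I (\<lambda>_. D)) (borel \<Otimes>\<^sub>M D)"
    using assms(2,3) by (intro measurable_Pair measurable_component_singleton) auto
  from measurable_compose[OF this assms(1)] show ?thesis by simp
qed

lemma gd_meas:
  fixes grad :: "'a::euclidean_space \<Rightarrow> 'z \<Rightarrow> 'a"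
  assumes gm: "(\<lambda>(w, z). grad w z) \<in> borel_measurable (borel \<Otimes>\<^sub>M D)"
  shows "(\<lambda>S. gd_iter grad eta n W1 S k) \<in> borel_measurable (PiM {..<n} (\<lambda>_. D))"
proof (induction k)
  case (Suc k)
  have "(\<lambda>S. grad (gd_iter grad eta n W1 S k) (S j)) \<in> borel_measurable (PiM {..<n} (\<lambda>_. D))" if "j < n" for j
    using comp_meas[OF gm Suc] that by simp
  note gm' = this
  have eq: "(\<lambda>S. gd_iter grad eta n W1 S (Suc k)) = (\<lambda>S. gd_iter grad eta n W1 S k -
     (eta (Suc k) / real n) *\<^sub>R (\<Sum>j<n. grad (gd_iter grad eta n W1 S k) (S j)))"
    by (rule ext) simp
  show ?case unfolding eq
    by (intro borel_measurable_diff borel_measurable_const_scaleR borel_measurable_sum Suc gm') auto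
qed simp

lemma ennreal_fin:
  fixes d X :: ennreal and a :: real
  assumes "a \<ge> 0"
  shows "ennreal a * (d + 2 * X) \<le> ennreal (4 * a) * (d + X)"
proof -
  have "d + 2 * X \<le> 4 * d + 4 * X"
  proof (intro add_mono)
    show "d \<le> 4 * d" using mult_right_mono[of 1 4 d] by simp
    show "2 * X \<le> 4 * X" by (intro mult_right_mono) auto
  qed
  also have "\<dots> = 4 * (d + X)" by (simp add: distrib_left)
  finally have "ennreal a * (d + 2 * X) \<le> ennreal a * (4 * (d + X))" by (intro mult_left_mono) auto
  also have "\<dots> = ennreal (4 * a) * (d + X)" using assms by (simp add: ennreal_mult mult_ac)
  finally show ?thesis .
qed

theorem theorem10:
  fixes D :: "'z measure"
    and f :: "'a::euclidean_space \<Rightarrow> 'z \<Rightarrow> real"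
    and grad :: "'a \<Rightarrow> 'z \<Rightarrow> 'a"
    and \<beta> :: real and eta :: "nat \<Rightarrow> real" and W1 :: 'a
    and n T i :: nat
    and Wstar :: "(nat \<Rightarrow> 'z) \<Rightarrow> 'a"
  assumes D: "prob_space D"
    and i: "i < n"
    and f_nonneg: "\<And>w z. f w z \<ge> 0"
    and f_meas: "(\<lambda>(w, z). f w z) \<in> borel_measurable (borel \<Otimes>\<^sub>M D)"
    and grad_meas: "(\<lambda>(w, z). grad w z) \<in> borel_measurable (borel \<Otimes>\<^sub>M D)"
    and gradient: "\<And>w z. GDERIV (\<lambda>u. f u z) w :> grad w z"
    and convex: "\<And>z. convex_on UNIV (\<lambda>w. f w z)"
    and beta_pos: "\<beta> > 0"
    and smooth: "\<And>w u z. norm (grad w z - grad u z) \<le> \<beta> * norm (w - u)"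
    and eta: "\<And>t. t \<in> {1..T+1} \<Longrightarrow> 0 < eta t \<and> eta t \<le> 1 / (2 * \<beta>)"
    and Wstar_min: "\<And>S w. S \<in> space (PiM {..<n} (\<lambda>_. D)) \<Longrightarrow>
                       emp_risk f n S (Wstar S) \<le> emp_risk f n S w"
    and Wstar_meas: "Wstar \<in> borel_measurable (PiM {..<n} (\<lambda>_. D))"
  shows
   "(let M = PiM {..<n} (\<lambda>_. D) \<Otimes>\<^sub>M D;
         A = (\<lambda>S. gd_iter grad eta n W1 S T);
         W = (\<lambda>S t. gd_iter grad eta n W1 S (t - 1));
         sum_eta = (\<Sum>t\<in>{1..T}. eta t);
         eps_stab = (\<integral>\<^sup>+ Sz. ennreal ((norm (A (fst Sz) - A ((fst Sz)(i := snd Sz))))\<^sup>2) \<partial>M);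
         eps_path = (\<Sum>t\<in>{1..T}. ennreal (eta t) *
                        (\<integral>\<^sup>+ Sz. ennreal ((norm (grad (W (fst Sz) t) (fst Sz i)))\<^sup>2) \<partial>M));
         eps_c = (\<integral>\<^sup>+ Sz. ennreal (emp_risk f n (fst Sz) (Wstar (fst Sz))) \<partial>M);
         dist0 = (\<integral>\<^sup>+ Sz. ennreal ((norm (W1 - Wstar (fst Sz)))\<^sup>2) \<partial>M)
     in eps_stab \<le> ennreal (4 / (real n)\<^sup>2 * sum_eta) * eps_path
        \<and> ennreal (4 / (real n)\<^sup>2 * sum_eta) * eps_path
            \<le> ennreal (32 * \<beta> * sum_eta / (real n)\<^sup>2) * (dist0 + eps_c * ennreal sum_eta))"
proof -
  interpret G: gdsetup f grad \<beta> eta n W1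
    using gradient convex beta_pos smooth f_nonneg by unfold_locales auto
  interpret D: prob_space D by (rule D)
  define P where "P = PiM {..<n} (\<lambda>_. D)"
  define M where "M = P \<Otimes>\<^sub>M D"
  interpret P: prob_space P unfolding P_def by (intro prob_space_PiM) (simp add: D)
  have n: "n > 0" using i by simp
  define E where "E = (\<Sum>t\<in>{1..T}. eta t)"
  define Wt where "Wt S k = gd_iter grad eta n W1 S k" for S k
  define h where "h t S = (norm (grad (Wt S (t - 1)) (S i)))\<^sup>2" for t S
  define R where "R S w = emp_risk f n S w" for S w
  have etaT: "\<And>t. t \<in> {1..T} \<Longrightarrow> 0 < eta t \<and> eta t \<le> 1 / (2 * \<beta>)" using eta by auto
  have E0: "E \<ge> 0" unfolding E_def using etaT by (intro sum_nonneg) (auto intro: less_imp_le)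

  have Wm: "(\<lambda>S. Wt S k) \<in> borel_measurable P" for k
    unfolding Wt_def P_def by (rule gd_meas[OF grad_meas])
  have hm: "h t \<in> borel_measurable P" for t
  proof -
    have "(\<lambda>S. grad (Wt S (t - 1)) (S i)) \<in> borel_measurable P"
      unfolding P_def by (rule comp_meas[OF grad_meas Wm[unfolded P_def]]) (use i in simp)
    then show ?thesis unfolding h_def[abs_def] by measurable
  qed
  have fm: "(\<lambda>S. f (F S) (S j)) \<in> borel_measurable P" if "F \<in> borel_measurable P" "j < n" for F j
    unfolding P_def by (rule comp_meas[OF f_meas that(1)[unfolded P_def]]) (use that in simp)
  have Rm: "(\<lambda>S. R S (F S)) \<in> borel_measurable P" if "F \<in> borel_measurable P" for F
    unfolding R_def emp_risk_def
    by (intro borel_measurable_divide borel_measurable_sum borel_measurable_const fm[OF that]) auto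
  have fstm: "fst \<in> measurable M P" unfolding M_def by simp
  have updm: "(\<lambda>(X, x). X(i := x)) \<in> measurable M P"
    using measurable_add_dim[of i "{..<n}" "\<lambda>_. D"] i unfolding M_def P_def
    by (simp add: insert_absorb)

  have int_fst: "(\<integral>\<^sup>+Sz. g (fst Sz) \<partial>M) = (\<integral>\<^sup>+S. g S \<partial>P)" if g: "g \<in> borel_measurable P" for g
  proof -
    have "(\<integral>\<^sup>+Sz. g (fst Sz) \<partial>M) = (\<integral>\<^sup>+S. \<integral>\<^sup>+z. g (fst (S, z)) \<partial>D \<partial>P)"
      unfolding M_def by (rule D.nn_integral_fst[symmetric]) (use measurable_compose[OF fstm g] in \<open>simp add: M_def\<close>)
    also have "\<dots> = (\<integral>\<^sup>+S. g S \<partial>P)" by (simp add: D.emeasure_space_1)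
    finally show ?thesis .
  qed
  have distr: "distr M P (\<lambda>(X, x). X(i := x)) = P"
    unfolding M_def P_def by (rule distr_upd_PiM) (use D i in auto)
  have int_upd: "(\<integral>\<^sup>+Sz. g ((fst Sz)(i := snd Sz)) \<partial>M) = (\<integral>\<^sup>+S. g S \<partial>P)" if g: "g \<in> borel_measurable P" for g
  proof -
    have "(\<integral>\<^sup>+S. g S \<partial>distr M P (\<lambda>(X, x). X(i := x))) = (\<integral>\<^sup>+Sz. g ((\<lambda>(X, x). X(i := x)) Sz) \<partial>M)"
      by (rule nn_integral_distr[OF updm]) (use g in simp)
    then show ?thesis unfolding distr by (simp add: case_prod_beta)
  qed

  have exch: "(\<integral>\<^sup>+S. ennreal (f (Wt S k) (S j)) \<partial>P) = (\<integral>\<^sup>+S. ennreal (f (Wt S k) (S i)) \<partial>P)"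
    if j: "j < n" for j k
  proof -
    define Tj where "Tj \<omega> = (\<lambda>m\<in>{..<n}. \<omega> (sw i j m))" for \<omega> :: "nat \<Rightarrow> 'z"
    have Tjm: "Tj \<in> measurable P P"
      unfolding Tj_def P_def
      by (intro measurable_restrict measurable_component_singleton) (auto simp: sw_lt[OF i j])
    have dT: "distr P P Tj = P" unfolding P_def Tj_def by (rule distr_sw[OF D i j])
    have gm: "(\<lambda>S. ennreal (f (Wt S k) (S j))) \<in> borel_measurable P"
      using fm[OF Wm j] by measurable
    have "(\<integral>\<^sup>+S. ennreal (f (Wt S k) (S j)) \<partial>distr P P Tj) = (\<integral>\<^sup>+\<omega>. ennreal (f (Wt (Tj \<omega>) k) (Tj \<omega> j)) \<partial>P)"
      by (rule nn_integral_distr[OF Tjm]) (use gm in simp)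
    also have "\<dots> = (\<integral>\<^sup>+\<omega>. ennreal (f (Wt \<omega> k) (\<omega> i)) \<partial>P)"
    proof (rule nn_integral_cong)
      fix \<omega> :: "nat \<Rightarrow> 'z"
      have "Wt (Tj \<omega>) k = gd_iter grad eta n W1 (\<lambda>m. \<omega> (sw i j m)) k"
        unfolding Wt_def Tj_def by (rule gd_cong) simp
      also have "\<dots> = Wt \<omega> k" unfolding Wt_def by (rule gd_perm[OF sw_bij[OF i j]])
      finally show "ennreal (f (Wt (Tj \<omega>) k) (Tj \<omega> j)) = ennreal (f (Wt \<omega> k) (\<omega> i))"
        using j by (simp add: Tj_def sw_def)
    qed
    finally show ?thesis unfolding dT .
  qed
  have exchR: "(\<integral>\<^sup>+S. ennreal (f (Wt S k) (S i)) \<partial>P) = (\<integral>\<^sup>+S. ennreal (R S (Wt S k)) \<partial>P)" for k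
  proof -
    have pt: "ennreal (R S (Wt S k)) = ennreal (1 / real n) * (\<Sum>j<n. ennreal (f (Wt S k) (S j)))" for S
      unfolding R_def emp_risk_def
      by (subst sum_ennreal) (auto simp: f_nonneg ennreal_mult[symmetric] sum_nonneg)
    have "(\<integral>\<^sup>+S. ennreal (R S (Wt S k)) \<partial>P) = ennreal (1 / real n) * (\<Sum>j<n. \<integral>\<^sup>+S. ennreal (f (Wt S k) (S j)) \<partial>P)"
    proof -
      have em: "(\<lambda>S. ennreal (f (Wt S k) (S j))) \<in> borel_measurable P" if "j < n" for j
        using fm[OF Wm that] by measurable
      have "(\<integral>\<^sup>+S. (\<Sum>j<n. ennreal (f (Wt S k) (S j))) \<partial>P) = (\<Sum>j<n. \<integral>\<^sup>+S. ennreal (f (Wt S k) (S j)) \<partial>P)"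
        by (rule nn_integral_sum) (use em in auto)
      moreover have "(\<lambda>S. \<Sum>j<n. ennreal (f (Wt S k) (S j))) \<in> borel_measurable P"
        by (intro borel_measurable_sum em) auto
      ultimately show ?thesis unfolding pt by (subst nn_integral_cmult) auto
    qed
    also have "\<dots> = ennreal (1 / real n) * (of_nat n * (\<integral>\<^sup>+S. ennreal (f (Wt S k) (S i)) \<partial>P))"
      using exch by simp
    also have "\<dots> = (\<integral>\<^sup>+S. ennreal (f (Wt S k) (S i)) \<partial>P)"
      using n by (simp add: mult.assoc[symmetric] ennreal_of_nat_eq_real_of_nat ennreal_mult[symmetric])
    finally show ?thesis by simp
  qed

  have updm': "(\<lambda>Sz. (fst Sz)(i := snd Sz)) \<in> measurable M P"
    unfolding M_def P_def by (rule measurable_fun_upd[where J="{..<n}"]) (use i in auto)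
  have hP: "(\<lambda>S. ennreal (h t S)) \<in> borel_measurable P" for t using hm[of t] by measurable
  have hfm: "(\<lambda>Sz. ennreal (h t (fst Sz))) \<in> borel_measurable M" for t
    using measurable_compose[OF fstm hP] by simp
  have hum: "(\<lambda>Sz. ennreal (h t ((fst Sz)(i := snd Sz)))) \<in> borel_measurable M" for t
    using measurable_compose[OF updm' hP] by simp
  have h0: "h t S \<ge> 0" for t S by (simp add: h_def)
  have R0: "R S w \<ge> 0" for S w by (simp add: R_def emp_risk_def f_nonneg sum_nonneg)
  define I where "I t = (\<integral>\<^sup>+S. ennreal (h t S) \<partial>P)" for t
  define epsP where "epsP = (\<Sum>t\<in>{1..T}. ennreal (eta t) * I t)"

  define c where "c = 2 * E / (real n)\<^sup>2"
  have c0: "c \<ge> 0" using E0 by (simp add: c_def)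
  have pt1: "ennreal ((norm (Wt S T - Wt (S(i:=z)) T))\<^sup>2) \<le>
     ennreal c * (\<Sum>t\<in>{1..T}. ennreal (eta t) * (ennreal (h t S) + ennreal (h t (S(i:=z)))))" for S z
  proof -
    have "(norm (Wt S T - Wt (S(i:=z)) T))\<^sup>2 \<le> c * (\<Sum>t\<in>{1..T}. eta t * (h t S + h t (S(i:=z))))"
      using G.stab_sq[OF i etaT, where S=S and z=z] unfolding c_def E_def h_def Wt_def by simp
    then have "ennreal ((norm (Wt S T - Wt (S(i:=z)) T))\<^sup>2) \<le> ennreal (c * (\<Sum>t\<in>{1..T}. eta t * (h t S + h t (S(i:=z)))))"
      by (rule ennreal_leI)
    also have "\<dots> = ennreal c * ennreal (\<Sum>t\<in>{1..T}. eta t * (h t S + h t (S(i:=z))))"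
      proof (rule ennreal_mult[OF c0])
      show "0 \<le> (\<Sum>t\<in>{1..T}. eta t * (h t S + h t (S(i:=z))))"
        using etaT h0 by (intro sum_nonneg mult_nonneg_nonneg add_nonneg_nonneg) (auto intro: less_imp_le)
    qed
    also have "ennreal (\<Sum>t\<in>{1..T}. eta t * (h t S + h t (S(i:=z)))) =
        (\<Sum>t\<in>{1..T}. ennreal (eta t) * (ennreal (h t S) + ennreal (h t (S(i:=z)))))"
      using h0 etaT by (subst sum_ennreal[symmetric]) (auto intro!: sum.cong simp: ennreal_mult less_imp_le)
    finally show ?thesis .
  qed
  have stab: "(\<integral>\<^sup>+Sz. ennreal ((norm (Wt (fst Sz) T - Wt ((fst Sz)(i := snd Sz)) T))\<^sup>2) \<partial>M)
      \<le> ennreal (4 / (real n)\<^sup>2 * E) * epsP"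
  proof -
    have "(\<integral>\<^sup>+Sz. ennreal ((norm (Wt (fst Sz) T - Wt ((fst Sz)(i := snd Sz)) T))\<^sup>2) \<partial>M)
      \<le> (\<integral>\<^sup>+Sz. ennreal c * (\<Sum>t\<in>{1..T}. ennreal (eta t) * (ennreal (h t (fst Sz)) + ennreal (h t ((fst Sz)(i := snd Sz))))) \<partial>M)"
      by (rule nn_integral_mono) (rule pt1)
    also have "\<dots> = ennreal c * (\<Sum>t\<in>{1..T}. ennreal (eta t) * ((\<integral>\<^sup>+Sz. ennreal (h t (fst Sz)) \<partial>M) + (\<integral>\<^sup>+Sz. ennreal (h t ((fst Sz)(i := snd Sz))) \<partial>M)))"
    proof -
      have m1: "(\<lambda>Sz. ennreal (eta t) * (ennreal (h t (fst Sz)) + ennreal (h t ((fst Sz)(i := snd Sz))))) \<in> borel_measurable M" for t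
        using hfm[of t] hum[of t] by measurable
      have "(\<integral>\<^sup>+Sz. ennreal c * (\<Sum>t\<in>{1..T}. ennreal (eta t) * (ennreal (h t (fst Sz)) + ennreal (h t ((fst Sz)(i := snd Sz))))) \<partial>M)
        = ennreal c * (\<integral>\<^sup>+Sz. (\<Sum>t\<in>{1..T}. ennreal (eta t) * (ennreal (h t (fst Sz)) + ennreal (h t ((fst Sz)(i := snd Sz))))) \<partial>M)"
        by (rule nn_integral_cmult) (intro borel_measurable_sum m1)
      also have "(\<integral>\<^sup>+Sz. (\<Sum>t\<in>{1..T}. ennreal (eta t) * (ennreal (h t (fst Sz)) + ennreal (h t ((fst Sz)(i := snd Sz))))) \<partial>M)
        = (\<Sum>t\<in>{1..T}. (\<integral>\<^sup>+Sz. ennreal (eta t) * (ennreal (h t (fst Sz)) + ennreal (h t ((fst Sz)(i := snd Sz)))) \<partial>M))"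
        by (rule nn_integral_sum) (rule m1)
      also have "\<dots> = (\<Sum>t\<in>{1..T}. ennreal (eta t) * ((\<integral>\<^sup>+Sz. ennreal (h t (fst Sz)) \<partial>M) + (\<integral>\<^sup>+Sz. ennreal (h t ((fst Sz)(i := snd Sz))) \<partial>M)))"
      proof (rule sum.cong[OF refl])
        fix t
        have am: "(\<lambda>Sz. ennreal (h t (fst Sz)) + ennreal (h t ((fst Sz)(i := snd Sz)))) \<in> borel_measurable M"
          by (rule borel_measurable_add[OF hfm hum])
        show "(\<integral>\<^sup>+Sz. ennreal (eta t) * (ennreal (h t (fst Sz)) + ennreal (h t ((fst Sz)(i := snd Sz)))) \<partial>M) =
          ennreal (eta t) * ((\<integral>\<^sup>+Sz. ennreal (h t (fst Sz)) \<partial>M) + (\<integral>\<^sup>+Sz. ennreal (h t ((fst Sz)(i := snd Sz))) \<partial>M))"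
          unfolding nn_integral_cmult[OF am] nn_integral_add[OF hfm hum] ..
      qed
      finally show ?thesis .
    qed
    also have "\<dots> = ennreal c * (\<Sum>t\<in>{1..T}. ennreal (eta t) * (I t + I t))"
      unfolding I_def int_fst[OF hP] int_upd[OF hP] ..
    also have "\<dots> = ennreal c * (2 * epsP)"
    proof -
      have "(\<Sum>t\<in>{1..T}. ennreal (eta t) * (I t + I t)) = epsP + epsP"
        unfolding epsP_def distrib_left by (rule sum.distrib)
      then show ?thesis by (simp only: mult_2)
    qed
    also have "\<dots> = ennreal (4 / (real n)\<^sup>2 * E) * epsP"
    proof -
      have "4 / (real n)\<^sup>2 * E = c * 2" by (simp add: c_def)
      then have "ennreal (4 / (real n)\<^sup>2 * E) = ennreal c * 2"
        using ennreal_mult[OF c0, of 2] by simp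
      then show ?thesis by (simp only: mult.assoc)
    qed
    finally show ?thesis .
  qed

  have bnd_t: "I t \<le> ennreal (2 * \<beta>) * (\<integral>\<^sup>+S. ennreal (R S (Wt S (t - 1))) \<partial>P)" for t
  proof -
    have fmi: "(\<lambda>S. ennreal (f (Wt S (t - 1)) (S i))) \<in> borel_measurable P" using fm[OF Wm i] by measurable
    have "I t \<le> (\<integral>\<^sup>+S. ennreal (2 * \<beta>) * ennreal (f (Wt S (t - 1)) (S i)) \<partial>P)"
      unfolding I_def
    proof (rule nn_integral_mono)
      fix S
      have "h t S \<le> 2 * \<beta> * f (Wt S (t - 1)) (S i)" unfolding h_def by (rule G.self_bound')
      then have "ennreal (h t S) \<le> ennreal (2 * \<beta> * f (Wt S (t - 1)) (S i))" by (rule ennreal_leI)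
      also have "\<dots> = ennreal (2 * \<beta>) * ennreal (f (Wt S (t - 1)) (S i))"
        using beta_pos by (intro ennreal_mult) (auto simp: f_nonneg)
      finally show "ennreal (h t S) \<le> ennreal (2 * \<beta>) * ennreal (f (Wt S (t - 1)) (S i))" .
    qed
    also have "\<dots> = ennreal (2 * \<beta>) * (\<integral>\<^sup>+S. ennreal (f (Wt S (t - 1)) (S i)) \<partial>P)"
      by (rule nn_integral_cmult[OF fmi])
    also have "\<dots> = ennreal (2 * \<beta>) * (\<integral>\<^sup>+S. ennreal (R S (Wt S (t - 1))) \<partial>P)"
      using exchR by simp
    finally show ?thesis .
  qed
  have Rtm: "(\<lambda>S. ennreal (R S (Wt S k))) \<in> borel_measurable P" for k using Rm[OF Wm] by measurable
  have Wsm: "Wstar \<in> borel_measurable P" using Wstar_meas by (simp add: P_def)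
  have dm: "(\<lambda>S. ennreal ((norm (W1 - Wstar S))\<^sup>2)) \<in> borel_measurable P" using Wsm by measurable
  have cm: "(\<lambda>S. ennreal (R S (Wstar S))) \<in> borel_measurable P" using Rm[OF Wsm] by measurable
  define dP where "dP = (\<integral>\<^sup>+S. ennreal ((norm (W1 - Wstar S))\<^sup>2) \<partial>P)"
  define cP where "cP = (\<integral>\<^sup>+S. ennreal (R S (Wstar S)) \<partial>P)"
  define Q where "Q S = (\<Sum>t\<in>{1..T}. ennreal (eta t) * (ennreal (2 * \<beta>) * ennreal (R S (Wt S (t - 1)))))" for S
  have "epsP \<le> (\<Sum>t\<in>{1..T}. ennreal (eta t) * (ennreal (2 * \<beta>) * (\<integral>\<^sup>+S. ennreal (R S (Wt S (t - 1))) \<partial>P)))"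
    unfolding epsP_def by (intro sum_mono mult_left_mono bnd_t) auto
  also have "\<dots> = (\<integral>\<^sup>+S. Q S \<partial>P)"
  proof -
    have qm: "(\<lambda>S. ennreal (eta t) * (ennreal (2 * \<beta>) * ennreal (R S (Wt S (t - 1))))) \<in> borel_measurable P" for t
      using Rtm[of "t - 1"] by measurable
    have "(\<integral>\<^sup>+S. Q S \<partial>P) = (\<Sum>t\<in>{1..T}. \<integral>\<^sup>+S. ennreal (eta t) * (ennreal (2 * \<beta>) * ennreal (R S (Wt S (t - 1)))) \<partial>P)"
      unfolding Q_def by (rule nn_integral_sum) (rule qm)
    also have "\<dots> = (\<Sum>t\<in>{1..T}. ennreal (eta t) * (ennreal (2 * \<beta>) * (\<integral>\<^sup>+S. ennreal (R S (Wt S (t - 1))) \<partial>P)))"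
    proof (rule sum.cong[OF refl])
      fix t
      have m2: "(\<lambda>S. ennreal (2 * \<beta>) * ennreal (R S (Wt S (t - 1)))) \<in> borel_measurable P"
        using Rtm[of "t - 1"] by measurable
      show "(\<integral>\<^sup>+S. ennreal (eta t) * (ennreal (2 * \<beta>) * ennreal (R S (Wt S (t - 1)))) \<partial>P) =
          ennreal (eta t) * (ennreal (2 * \<beta>) * (\<integral>\<^sup>+S. ennreal (R S (Wt S (t - 1))) \<partial>P))"
        unfolding nn_integral_cmult[OF m2] nn_integral_cmult[OF Rtm] ..
    qed
    finally show ?thesis by simp
  qed
  also have "\<dots> \<le> (\<integral>\<^sup>+S. ennreal (2 * \<beta>) * (ennreal ((norm (W1 - Wstar S))\<^sup>2) + 2 * (ennreal (R S (Wstar S)) * ennreal E)) \<partial>P)"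
  proof (rule nn_integral_mono)
    fix S
    have eta0: "t \<in> {1..T} \<Longrightarrow> eta t \<ge> 0" for t using etaT[of t] by auto
    have X0: "0 \<le> (\<Sum>t\<in>{1..T}. eta t * R S (Wt S (t - 1)))"
      using eta0 R0 by (intro sum_nonneg mult_nonneg_nonneg) auto
    have "Q S = ennreal (2 * \<beta>) * (\<Sum>t\<in>{1..T}. ennreal (eta t) * ennreal (R S (Wt S (t - 1))))"
      unfolding Q_def sum_distrib_left by (rule sum.cong) (auto simp: mult_ac)
    also have "(\<Sum>t\<in>{1..T}. ennreal (eta t) * ennreal (R S (Wt S (t - 1)))) = ennreal (\<Sum>t\<in>{1..T}. eta t * R S (Wt S (t - 1)))"
      using eta0 R0 by (subst sum_ennreal[symmetric]) (auto intro!: sum.cong simp: ennreal_mult)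
    also have "ennreal (2 * \<beta>) * \<dots> = ennreal (2 * \<beta> * (\<Sum>t\<in>{1..T}. eta t * R S (Wt S (t - 1))))"
      using beta_pos X0 by (intro ennreal_mult[symmetric]) auto
    also have "\<dots> \<le> ennreal (2 * \<beta> * ((norm (W1 - Wstar S))\<^sup>2 + 2 * (R S (Wstar S) * E)))"
    proof (rule ennreal_leI, rule mult_left_mono)
      have "(norm (Wt S T - Wstar S))\<^sup>2 + (\<Sum>t\<in>{1..T}. eta t * R S (Wt S (t - 1)))
          \<le> (norm (W1 - Wstar S))\<^sup>2 + 2 * R S (Wstar S) * E"
        using G.gd_conv[OF n etaT, where S=S and v="Wstar S"] unfolding R_def Wt_def E_def .
      moreover have "0 \<le> (norm (Wt S T - Wstar S))\<^sup>2" by simp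
      ultimately have "(\<Sum>t\<in>{1..T}. eta t * R S (Wt S (t - 1))) \<le> (norm (W1 - Wstar S))\<^sup>2 + 2 * R S (Wstar S) * E"
        by linarith
      then show "(\<Sum>t\<in>{1..T}. eta t * R S (Wt S (t - 1))) \<le> (norm (W1 - Wstar S))\<^sup>2 + 2 * (R S (Wstar S) * E)"
        by (simp add: mult.assoc)
    qed (use beta_pos in auto)
    also have "\<dots> = ennreal (2 * \<beta>) * (ennreal ((norm (W1 - Wstar S))\<^sup>2) + 2 * (ennreal (R S (Wstar S)) * ennreal E))"
    proof -
      have r0: "R S (Wstar S) \<ge> 0" by (rule R0)
      have k1: "ennreal (R S (Wstar S) * E) = ennreal (R S (Wstar S)) * ennreal E"
        by (rule ennreal_mult[OF r0 E0])
      have k2: "ennreal (2 * (R S (Wstar S) * E)) = 2 * ennreal (R S (Wstar S) * E)"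
        using ennreal_mult[of 2 "R S (Wstar S) * E"] r0 E0 by simp
      have k3: "ennreal ((norm (W1 - Wstar S))\<^sup>2 + 2 * (R S (Wstar S) * E)) =
          ennreal ((norm (W1 - Wstar S))\<^sup>2) + ennreal (2 * (R S (Wstar S) * E))"
        using r0 E0 by (intro ennreal_plus) auto
      have k4: "ennreal (2 * \<beta> * ((norm (W1 - Wstar S))\<^sup>2 + 2 * (R S (Wstar S) * E))) =
          ennreal (2 * \<beta>) * ennreal ((norm (W1 - Wstar S))\<^sup>2 + 2 * (R S (Wstar S) * E))"
        using r0 E0 beta_pos by (intro ennreal_mult) auto
      show ?thesis unfolding k4 k3 k2 k1 ..
    qed
    finally show "Q S \<le> ennreal (2 * \<beta>) * (ennreal ((norm (W1 - Wstar S))\<^sup>2) + 2 * (ennreal (R S (Wstar S)) * ennreal E))" .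
  qed
  also have "\<dots> = ennreal (2 * \<beta>) * (dP + 2 * (cP * ennreal E))"
  proof -
    have m3: "(\<lambda>S. 2 * (ennreal (R S (Wstar S)) * ennreal E)) \<in> borel_measurable P" using cm by measurable
    have m4: "(\<lambda>S. ennreal ((norm (W1 - Wstar S))\<^sup>2) + 2 * (ennreal (R S (Wstar S)) * ennreal E)) \<in> borel_measurable P"
      using cm dm by measurable
    have m5: "(\<lambda>S. ennreal (R S (Wstar S)) * ennreal E) \<in> borel_measurable P" using cm by measurable
    show ?thesis
      unfolding nn_integral_cmult[OF m4] nn_integral_add[OF dm m3] nn_integral_cmult[OF m5] dP_def cP_def
      by (simp add: nn_integral_multc[OF cm])
  qed
  finally have part2: "epsP \<le> ennreal (2 * \<beta>) * (dP + 2 * (cP * ennreal E))" .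

  have fin: "ennreal (4 / (real n)\<^sup>2 * E) * epsP \<le> ennreal (32 * \<beta> * E / (real n)\<^sup>2) * (dP + cP * ennreal E)"
  proof -
    define a where "a = 4 / (real n)\<^sup>2 * E * (2 * \<beta>)"
    have a0: "a \<ge> 0" using E0 beta_pos by (simp add: a_def)
    have "ennreal (4 / (real n)\<^sup>2 * E) * epsP \<le> ennreal (4 / (real n)\<^sup>2 * E) * (ennreal (2 * \<beta>) * (dP + 2 * (cP * ennreal E)))"
      by (rule mult_left_mono[OF part2]) simp
    also have "\<dots> = ennreal a * (dP + 2 * (cP * ennreal E))"
    proof -
      have "ennreal a = ennreal (4 / (real n)\<^sup>2 * E) * ennreal (2 * \<beta>)"
        unfolding a_def using E0 beta_pos by (intro ennreal_mult) auto
      then show ?thesis by (simp add: mult.assoc)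
    qed
    also have "\<dots> \<le> ennreal (4 * a) * (dP + cP * ennreal E)" by (rule ennreal_fin[OF a0])
    also have "4 * a = 32 * \<beta> * E / (real n)\<^sup>2" by (simp add: a_def field_simps)
    finally show ?thesis .
  qed

  have e1: "(\<integral>\<^sup>+Sz. ennreal ((norm (gd_iter grad eta n W1 (fst Sz) T - gd_iter grad eta n W1 ((fst Sz)(i := snd Sz)) T))\<^sup>2) \<partial>M)
      \<le> ennreal (4 / (real n)\<^sup>2 * E) * epsP"
    using stab by (simp add: Wt_def)
  have e2: "(\<Sum>t\<in>{1..T}. ennreal (eta t) * (\<integral>\<^sup>+Sz. ennreal ((norm (grad (gd_iter grad eta n W1 (fst Sz) (t - 1)) (fst Sz i)))\<^sup>2) \<partial>M)) = epsP"
    unfolding epsP_def I_def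
  proof (rule sum.cong[OF refl])
    fix t
    show "ennreal (eta t) * (\<integral>\<^sup>+Sz. ennreal ((norm (grad (gd_iter grad eta n W1 (fst Sz) (t - 1)) (fst Sz i)))\<^sup>2) \<partial>M) =
        ennreal (eta t) * (\<integral>\<^sup>+S. ennreal (h t S) \<partial>P)"
      using int_fst[OF hP, of t] by (simp add: h_def Wt_def)
  qed
  have e3: "(\<integral>\<^sup>+Sz. ennreal (emp_risk f n (fst Sz) (Wstar (fst Sz))) \<partial>M) = cP"
    using int_fst[OF cm] by (simp add: R_def cP_def)
  have e4: "(\<integral>\<^sup>+Sz. ennreal ((norm (W1 - Wstar (fst Sz)))\<^sup>2) \<partial>M) = dP"
    using int_fst[OF dm] by (simp add: dP_def)
  show ?thesis
    unfolding Let_def P_def[symmetric] M_def[symmetric] E_def[symmetric] e2 e3 e4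
    using e1 fin by simp
qed


end
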